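(* Let $(A,B)$ be an $n\times n$ definite pencil with eigenvalues $\lambda_1,\dots,\lambda_n\in\mathbb{R}$. Let $0<\epsilon<\min\{\sigma_n(B),\gamma(A,B)\}$, and set $$r_\epsilon=\frac{\epsilon}{\gamma(A,B)}\left[1+\left(\frac{\|A\|_2+\epsilon}{\sigma_n(B)-\epsilon}\right)^2\right],\qquad r_i=\begin{cases}\frac1{\|B\|_2},& A=0,\\ \max\left\{\frac1{\|B\|_2},\frac{|\lambda_i|}{\|A\|_2}\right\},&\text{otherwise,}\end{cases}$$ for $1\le i\le n$. Then $$\bigcup_{i=1}^n(\lambda_i-\epsilon r_i,\lambda_i+\epsilon r_i)\subseteq\Lambda^{\mathrm{sym}}_\epsilon(A,B)\subseteq\bigcup_{i=1}^n(\lambda_i-r_\epsilon,\lambda_i+r_\epsilon).$$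
   Context: A pencil $(A,B)$ of $n\times n$ complex matrices is definite if $A,B$ are Hermitian and $\gamma(A,B)=\min_{\|x\|_2=1}|x^H(A+iB)x|>0$; its eigenvalues are the roots of $\det(A-zB)$ with multiplicity. $\sigma_n(B)$ is the smallest singular value of $B$. For $\epsilon>0$, $\Lambda^{\mathrm{sym}}_\epsilon(A,B)=\{z\in\mathbb{C}:(A+E)u=z(B+F)u$ for some $u\ne0$ and Hermitian $E,F$ with $\sqrt{\|E\|_2^2+\|F\|_2^2}\le\epsilon\}$. *)

theory Defs
  imports "HOL-Analysis.Analysis"
begin

definition hermitian :: "complex^'n^'n \<Rightarrow> bool" where
  "hermitian M \<longleftrightarrow> (\<forall>i j. M $ i $ j = cnj (M $ j $ i))"

definition qform :: "complex^'n^'n \<Rightarrow> complex^'n \<Rightarrow> complex" where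
  "qform M x = (\<Sum>i\<in>UNIV. cnj (x $ i) * (M *v x) $ i)"

definition norm2 :: "complex^'n^'n \<Rightarrow> real" where
  "norm2 M = onorm (\<lambda>x. M *v x)"

definition sigma_min :: "complex^'n^'n \<Rightarrow> real" where
  "sigma_min M = Inf {norm (M *v x) | x. norm x = 1}"

definition crawford :: "complex^'n^'n \<Rightarrow> complex^'n^'n \<Rightarrow> real" where
  "crawford A B = Inf {cmod (qform (A + mat \<i> ** B) x) | x. norm x = 1}"

definition definite_pencil :: "complex^'n^'n \<Rightarrow> complex^'n^'n \<Rightarrow> bool" where
  "definite_pencil A B \<longleftrightarrow> hermitian A \<and> hermitian B \<and> crawford A B > 0"

definition sym_pseudospectrum :: "real \<Rightarrow> complex^'n^'n \<Rightarrow> complex^'n^'n \<Rightarrow> complex set" where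
  "sym_pseudospectrum \<epsilon> A B = {z. \<exists>u E F. u \<noteq> 0 \<and> hermitian E \<and> hermitian F \<and>
      sqrt ((norm2 E)\<^sup>2 + (norm2 F)\<^sup>2) \<le> \<epsilon> \<and> (A + E) *v u = z *s ((B + F) *v u)}"

end

theory Submission
  imports Defs
begin

definition ip :: "complex^'n \<Rightarrow> complex^'n \<Rightarrow> complex" where
  "ip x y = (\<Sum>i\<in>UNIV. cnj (x $ i) * y $ i)"

lemma qform_ip: "qform M x = ip x (M *v x)"
  by (simp add: qform_def ip_def)

lemma ip_add_right: "ip x (y + z) = ip x y + ip x z"
  by (simp add: ip_def distrib_left sum.distrib)
lemma ip_add_left: "ip (x + y) z = ip x z + ip y z"
  by (simp add: ip_def distrib_right sum.distrib)
lemma ip_diff_right: "ip x (y - z) = ip x y - ip x z"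
  by (simp add: ip_def right_diff_distrib sum_subtractf)
lemma ip_diff_left: "ip (x - y) z = ip x z - ip y z"
  by (simp add: ip_def left_diff_distrib sum_subtractf)
lemma ip_scale_right: "ip x (c *s y) = c * ip x y"
  by (simp add: ip_def sum_distrib_left algebra_simps)
lemma ip_scale_left: "ip (c *s x) y = cnj c * ip x y"
  by (simp add: ip_def sum_distrib_left algebra_simps)
lemma ip_zero_right[simp]: "ip x 0 = 0" by (simp add: ip_def)
lemma ip_zero_left[simp]: "ip 0 x = 0" by (simp add: ip_def)
lemma cnj_ip: "cnj (ip x y) = ip y x"
  by (simp add: ip_def mult.commute)

lemma norm_sq_vec: "(norm (x::complex^'n))\<^sup>2 = (\<Sum>i\<in>UNIV. (cmod (x$i))\<^sup>2)"
  by (simp add: norm_vec_def L2_set_def sum_nonneg)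

lemma ip_self: "ip x x = complex_of_real ((norm x)\<^sup>2)"
proof -
  have "ip x x = (\<Sum>i\<in>UNIV. complex_of_real ((cmod (x$i))\<^sup>2))"
    unfolding ip_def by (intro sum.cong refl) (metis complex_norm_square mult.commute)
  then show ?thesis by (simp add: norm_sq_vec)
qed

lemma Re_ip: "Re (ip x y) = inner x y"
  by (simp add: ip_def inner_vec_def Re_sum inner_complex_def)

lemma norm_smult_vec: "norm (c *s (x::complex^'n)) = cmod c * norm x"
proof -
  have "(norm (c *s x))\<^sup>2 = (cmod c * norm x)\<^sup>2"
    by (simp add: norm_sq_vec power_mult_distrib norm_mult sum_distrib_left)
  then show ?thesis by (simp add: power2_eq_iff_nonneg)
qed

lemma ip_cauchy: "cmod (ip x y) \<le> norm x * norm y"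
proof (cases "ip x y = 0")
  case True then show ?thesis by simp
next
  case False
  define c where "c = ip x y"
  define w where "w = cnj c / cmod c"
  have cw: "cmod w = 1" using False by (simp add: w_def c_def norm_divide)
  have "ip x (w *s y) = complex_of_real (cmod c)"
    using False by (simp add: ip_scale_right w_def c_def complex_norm_square[symmetric] power2_eq_square mult.commute)
  then have "cmod c = inner x (w *s y)" by (metis Re_ip Re_complex_of_real)
  also have "\<dots> \<le> norm x * norm (w *s y)" by (rule norm_cauchy_schwarz)
  also have "\<dots> = norm x * norm y" by (simp add: norm_smult_vec cw)
  finally show ?thesis by (simp add: c_def)
qed

definition adj :: "complex^'n^'n \<Rightarrow> complex^'n^'n" where
  "adj M = (\<chi> i j. cnj (M $ j $ i))"

lemma ip_adj: "ip x (M *v y) = ip (adj M *v x) y"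
proof -
  have "ip x (M *v y) = (\<Sum>i\<in>UNIV. \<Sum>j\<in>UNIV. cnj (x $ i) * (M$i$j * y$j))"
    by (simp add: ip_def matrix_vector_mult_def sum_distrib_left)
  also have "\<dots> = (\<Sum>j\<in>UNIV. \<Sum>i\<in>UNIV. cnj (x $ i) * (M$i$j * y$j))"
    by (rule sum.swap)
  also have "\<dots> = (\<Sum>j\<in>UNIV. (\<Sum>i\<in>UNIV. cnj (x $ i) * M$i$j) * y$j)"
    by (simp add: sum_distrib_right mult.assoc)
  also have "\<dots> = ip (adj M *v x) y"
    unfolding ip_def matrix_vector_mult_def adj_def
    by (intro sum.cong refl) (simp add: mult.commute)
  finally show ?thesis .
qed

lemma hermitian_adj: assumes "hermitian M" shows "adj M = M"
proof -
  have h: "\<And>i j. M$j$i = cnj (M$i$j)" using assms unfolding hermitian_def by blast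
  show ?thesis unfolding adj_def vec_eq_iff by (simp only: vec_lambda_beta) (metis h)
qed

lemma ip_herm: "hermitian M \<Longrightarrow> ip x (M *v y) = ip (M *v x) y"
  by (simp add: ip_adj hermitian_adj)

lemma qform_real: "hermitian M \<Longrightarrow> qform M x \<in> \<real>"
  by (metis Reals_cnj_iff cnj_ip ip_herm qform_ip)

lemma norm2_bound: "norm (M *v x) \<le> norm2 M * norm x"
  unfolding norm2_def by (rule onorm) simp

lemma norm2_nonneg: "0 \<le> norm2 M"
  unfolding norm2_def by (rule onorm_pos_le) simp

lemma norm2_le: "(\<And>x. norm (M *v x) \<le> b * norm x) \<Longrightarrow> norm2 M \<le> b"
  unfolding norm2_def by (rule onorm_le)

lemma mv_smult: "M *v (c *s x) = c *s (M *v (x::complex^'n))"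
  by (simp add: vec_eq_iff matrix_vector_mult_def sum_distrib_left mult.left_commute)

lemma scaleR_smult: "r *\<^sub>R (x::complex^'n) = complex_of_real r *s x"
  by (simp add: vec_eq_iff) (simp add: scaleR_conv_of_real)

lemma ifmul: "(if P then a else 0) * b = (if P then a * b else (0::complex))" by simp

lemma mat_mult_mv: "(mat c ** M) *v x = c *s (M *v (x::complex^'n))"
proof -
  have "(mat c ** M) *v x = mat c *v (M *v x)" by (simp add: matrix_vector_mul_assoc)
  also have "\<dots> = c *s (M *v x)"
    by (simp add: vec_eq_iff matrix_vector_mult_def mat_def ifmul)
  finally show ?thesis .
qed

lemma qform_smult: "qform M (c *s x) = complex_of_real ((cmod c)\<^sup>2) * qform M x"
proof -
  have "qform M (c *s x) = (cnj c * c) * qform M x"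
    by (simp add: qform_ip ip_scale_left ip_scale_right mv_smult)
  also have "cnj c * c = complex_of_real ((cmod c)\<^sup>2)"
    by (metis complex_norm_square mult.commute)
  finally show ?thesis .
qed

lemma qform_H: "qform (A + mat \<i> ** B) x = qform A x + \<i> * qform B x"
  by (simp add: qform_ip matrix_vector_mult_add_rdistrib mat_mult_mv ip_add_right ip_scale_right)

lemma continuous_qform: fixes M :: "complex^'n^'n" shows "continuous_on S (\<lambda>x. qform M x)"
proof -
  have c: "continuous_on S (\<lambda>x::complex^'n. x $ i)" for i
    by (rule linear_continuous_on[OF bounded_linear_vec_nth])
  show ?thesis unfolding qform_def matrix_vector_mult_def
    by (intro continuous_intros c)
qed

lemma unit_exists: "\<exists>x::complex^'n. norm x = 1"
proof -
  obtain k :: 'n where True by blast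
  have "norm (axis k (1::complex)) = 1"
    unfolding norm_vec_def L2_set_def axis_def
    by (simp add: if_distrib[where f=norm] if_distrib[where f="\<lambda>x. x\<^sup>2"] cong: if_cong)
  then show ?thesis by blast
qed

lemma normalize_vec: assumes "x \<noteq> (0::complex^'n)"
  shows "norm (complex_of_real (1 / norm x) *s x) = 1"
  using assms by (simp add: norm_smult_vec norm_divide)

lemma sigma_min_bound: "sigma_min B * norm x \<le> norm (B *v x)"
proof (cases "x = 0")
  case True then show ?thesis by simp
next
  case False
  define u where "u = complex_of_real (1 / norm x) *s x"
  have u1: "norm u = 1" using normalize_vec[OF False] by (simp add: u_def)
  have "sigma_min B \<le> norm (B *v u)"
    unfolding sigma_min_def
    by (rule cInf_lower) (use u1 in \<open>auto intro!: bdd_belowI[where m=0]\<close>)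
  also have "\<dots> = norm (B *v x) / norm x"
    using False by (simp add: u_def mv_smult norm_smult_vec norm_divide)
  finally show ?thesis using False by (simp add: pos_le_divide_eq)
qed

lemma crawford_bound: "crawford A B * (norm x)\<^sup>2 \<le> cmod (qform (A + mat \<i> ** B) x)"
proof (cases "x = 0")
  case True then show ?thesis by (simp add: qform_def)
next
  case False
  define u where "u = complex_of_real (1 / norm x) *s x"
  have u1: "norm u = 1" using normalize_vec[OF False] by (simp add: u_def)
  have "crawford A B \<le> cmod (qform (A + mat \<i> ** B) u)"
    unfolding crawford_def
    by (rule cInf_lower) (use u1 in \<open>auto intro!: bdd_belowI[where m=0]\<close>)
  also have "\<dots> = cmod (qform (A + mat \<i> ** B) x) / (norm x)\<^sup>2"
    using False by (simp add: u_def qform_smult norm_mult norm_divide power_divide norm_power)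
  finally show ?thesis using False by (simp add: pos_le_divide_eq)
qed

lemma crawford_attained:
  "\<exists>x0. norm x0 = 1 \<and> cmod (qform (A + mat \<i> ** B) x0) = crawford A B"
proof -
  let ?f = "\<lambda>x. cmod (qform (A + mat \<i> ** B) x)"
  have "sphere (0::complex^'n) 1 \<noteq> {}" using unit_exists by auto
  moreover have "continuous_on (sphere 0 1) ?f"
    by (intro continuous_intros continuous_qform)
  ultimately obtain x0 where x0: "x0 \<in> sphere 0 1" "\<forall>y\<in>sphere 0 1. ?f x0 \<le> ?f y"
    using continuous_attains_inf[OF compact_sphere] by blast
  have "crawford A B = ?f x0"
    unfolding crawford_def
  proof (rule cInf_eq_minimum)
    show "?f x0 \<in> {cmod (qform (A + mat \<i> ** B) x) |x. norm x = 1}" using x0 by auto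
    show "\<And>y. y \<in> {cmod (qform (A + mat \<i> ** B) x) |x. norm x = 1} \<Longrightarrow> ?f x0 \<le> y"
      using x0 by auto
  qed
  then show ?thesis using x0 by auto
qed


lemma small_delta: fixes a K :: real assumes "0 < a" "0 \<le> K"
  shows "\<exists>d>0. d \<le> 1 \<and> K * d \<le> a"
proof (intro exI conjI)
  let ?d = "min 1 (a / (K + 1))"
  show "0 < ?d" using assms by simp
  show "?d \<le> 1" by simp
  have "K * ?d \<le> (K + 1) * (a / (K + 1))"
    using assms by (intro mult_mono) auto
  also have "\<dots> = a" using assms by simp
  finally show "K * ?d \<le> a" .
qed

lemma tail_bound: fixes c2 c3 c4 t :: real assumes "\<bar>t\<bar> \<le> 1"
  shows "\<bar>c3*t^3 + c4*t^4\<bar> \<le> (\<bar>c3\<bar> + \<bar>c4\<bar>) * \<bar>t\<bar> * t^2"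
proof -
  have "\<bar>c3*t^3 + c4*t^4\<bar> \<le> \<bar>c3\<bar>*\<bar>t\<bar>^3 + \<bar>c4\<bar>*\<bar>t\<bar>^4"
    by (metis abs_mult power_abs abs_triangle_ineq)
  also have "\<bar>c4\<bar>*\<bar>t\<bar>^4 \<le> \<bar>c4\<bar>*\<bar>t\<bar>^3"
  proof -
    have "\<bar>t\<bar>^4 \<le> \<bar>t\<bar>^3" by (rule power_decreasing) (use assms in auto)
    then show ?thesis by (intro mult_left_mono) auto
  qed
  finally show ?thesis by (simp add: algebra_simps power2_eq_square power3_eq_cube)
qed

lemma poly_nonneg: fixes c1 c2 c3 c4 :: real
  assumes h: "\<And>t. 0 \<le> c1*t + c2*t^2 + c3*t^3 + c4*t^4"
  shows "c1 = 0 \<and> 0 \<le> c2"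
proof -
  have c1: "c1 = 0"
  proof (rule ccontr)
    assume "c1 \<noteq> 0"
    then have a: "0 < \<bar>c1\<bar> / 2" by simp
    obtain d where d: "0 < d" "d \<le> 1" "(\<bar>c2\<bar> + \<bar>c3\<bar> + \<bar>c4\<bar>) * d \<le> \<bar>c1\<bar> / 2"
      using small_delta[OF a, of "\<bar>c2\<bar> + \<bar>c3\<bar> + \<bar>c4\<bar>"] by auto
    define t where "t = - sgn c1 * d"
    have at: "\<bar>t\<bar> = d"
    proof -
      have "\<bar>t\<bar> = \<bar>sgn c1\<bar> * \<bar>d\<bar>" by (simp add: t_def abs_mult)
      then show ?thesis using \<open>c1 \<noteq> 0\<close> d by (simp add: abs_sgn_eq_1)
    qed
    have t2: "t^2 = d^2" using at by (metis power2_abs)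
    have lin: "c1 * t = - \<bar>c1\<bar> * d"
    proof -
      have "c1 * t = - (c1 * sgn c1) * d" by (simp add: t_def)
      then show ?thesis by (metis abs_sgn)
    qed
    have tb: "\<bar>c3*t^3 + c4*t^4\<bar> \<le> (\<bar>c3\<bar> + \<bar>c4\<bar>) * d * d^2"
      using tail_bound[of t c3 c4] at d t2 by simp
    have tb2: "(\<bar>c3\<bar> + \<bar>c4\<bar>) * d * d^2 \<le> (\<bar>c3\<bar> + \<bar>c4\<bar>) * d^2"
      using d by (intro mult_right_mono) (auto intro: mult_left_le)
    have "c2*t^2 \<le> \<bar>c2\<bar> * d^2"
      using t2 by (simp add: abs_ge_self mult_right_mono)
    then have "c1*t + c2*t^2 + c3*t^3 + c4*t^4 \<le> - \<bar>c1\<bar> * d + ((\<bar>c2\<bar> + \<bar>c3\<bar> + \<bar>c4\<bar>) * d) * d"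
      using tb tb2 lin by (simp add: algebra_simps power2_eq_square) linarith
    also have "((\<bar>c2\<bar> + \<bar>c3\<bar> + \<bar>c4\<bar>) * d) * d \<le> \<bar>c1\<bar> / 2 * d"
      using d by (intro mult_right_mono) auto
    finally have "c1*t + c2*t^2 + c3*t^3 + c4*t^4 \<le> - \<bar>c1\<bar> / 2 * d" by (simp add: algebra_simps)
    moreover have "- \<bar>c1\<bar> / 2 * d < 0" using d \<open>c1 \<noteq> 0\<close> by (simp add: mult_pos_pos)
    ultimately show False using h[of t] by linarith
  qed
  have c2: "0 \<le> c2"
  proof (rule ccontr)
    assume "\<not> 0 \<le> c2"
    then have a: "0 < - c2 / 2" by simp
    obtain d where d: "0 < d" "d \<le> 1" "(\<bar>c3\<bar> + \<bar>c4\<bar>) * d \<le> - c2 / 2"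
      using small_delta[OF a, of "\<bar>c3\<bar> + \<bar>c4\<bar>"] by auto
    have tb: "\<bar>c3*d^3 + c4*d^4\<bar> \<le> (\<bar>c3\<bar> + \<bar>c4\<bar>) * d * d^2"
      using tail_bound[of d c3 c4] d by simp
    also have "\<dots> \<le> - c2 / 2 * d^2"
      using d by (intro mult_right_mono) auto
    finally have "c2*d^2 + c3*d^3 + c4*d^4 \<le> c2 / 2 * d^2" by linarith
    moreover have "c2 / 2 * d^2 < 0" using d \<open>\<not> 0 \<le> c2\<close> by (simp add: mult_neg_pos)
    ultimately show False using h[of d] c1 by simp
  qed
  show ?thesis using c1 c2 by simp
qed


lemma quartic:
  fixes a b pr pi qr qi n :: real
  assumes h: "\<And>t. (a\<^sup>2 + b\<^sup>2) * (1 + t\<^sup>2 * n)\<^sup>2 \<le> (a + t*pr + t\<^sup>2*qr)\<^sup>2 + (b + t*pi + t\<^sup>2*qi)\<^sup>2"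
  shows "a*pr + b*pi = 0 \<and> 0 \<le> pr\<^sup>2 + pi\<^sup>2 + 2*(a*qr + b*qi) - 2*(a\<^sup>2 + b\<^sup>2)*n"
proof -
  let ?c1 = "2*(a*pr + b*pi)"
  let ?c2 = "pr\<^sup>2 + pi\<^sup>2 + 2*(a*qr + b*qi) - 2*(a\<^sup>2 + b\<^sup>2)*n"
  let ?c3 = "2*(pr*qr + pi*qi)"
  let ?c4 = "qr\<^sup>2 + qi\<^sup>2 - (a\<^sup>2 + b\<^sup>2)*n\<^sup>2"
  have "0 \<le> ?c1*t + ?c2*t^2 + ?c3*t^3 + ?c4*t^4" for t
  proof -
    have "(a + t*pr + t\<^sup>2*qr)\<^sup>2 + (b + t*pi + t\<^sup>2*qi)\<^sup>2 - (a\<^sup>2 + b\<^sup>2) * (1 + t\<^sup>2 * n)\<^sup>2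
          = ?c1*t + ?c2*t^2 + ?c3*t^3 + ?c4*t^4"
      by (simp add: power2_eq_square power3_eq_cube algebra_simps) (simp add: power_def algebra_simps)
    then show ?thesis using h[of t] by linarith
  qed
  from poly_nonneg[OF this] show ?thesis by simp
qed

lemma qform_add: "qform H (x + y) = qform H x + ip x (H *v y) + ip y (H *v x) + qform H y"
  by (simp add: qform_ip matrix_vector_right_distrib ip_add_left ip_add_right)

lemma qform_ofreal: "qform H (complex_of_real t *s h) = complex_of_real (t\<^sup>2) * qform H h"
  by (simp add: qform_smult)

lemma ip_x_smult: "ip x (H *v (c *s h)) = c * ip x (H *v h)"
  by (simp add: mv_smult ip_scale_right)

lemma ip_smult_x: "ip (c *s h) (H *v x) = cnj c * ip h (H *v x)"
  by (simp add: ip_scale_left)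

lemma norm_sq_add_orth: assumes "ip x h = 0"
  shows "(norm (x + h))\<^sup>2 = (norm x)\<^sup>2 + (norm h)\<^sup>2"
proof -
  have "ip h x = 0" using assms by (metis cnj_ip complex_cnj_zero)
  then have "ip (x + h) (x + h) = ip x x + ip h h"
    using assms by (simp add: ip_add_left ip_add_right)
  then show ?thesis by (metis ip_self of_real_add of_real_eq_iff)
qed

lemma cmod_sq: "(cmod z)\<^sup>2 = (Re z)\<^sup>2 + (Im z)\<^sup>2"
  by (simp add: cmod_def)

context
  fixes A B :: "complex^'n^'n" and x0 :: "complex^'n"
  assumes x0: "norm x0 = 1" and x0min: "cmod (qform (A + mat \<i> ** B) x0) = crawford A B"
begin

definition "HH = A + mat \<i> ** B"
definition "w0 = qform HH x0"

lemma cmod_w0: "cmod w0 = crawford A B" using x0min by (simp add: w0_def HH_def)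

lemma first_second:
  assumes orth: "ip x0 h = 0"
  shows "Re (cnj w0 * (ip x0 (HH *v h) + ip h (HH *v x0))) = 0
       \<and> 0 \<le> (cmod (ip x0 (HH *v h) + ip h (HH *v x0)))\<^sup>2 + 2 * Re (cnj w0 * qform HH h)
             - 2 * (crawford A B)\<^sup>2 * (norm h)\<^sup>2"
proof -
  define p where "p = ip x0 (HH *v h) + ip h (HH *v x0)"
  define q where "q = qform HH h"
  have ineq: "(crawford A B)\<^sup>2 * (1 + t\<^sup>2 * (norm h)\<^sup>2)\<^sup>2 \<le> (cmod (w0 + complex_of_real t * p + complex_of_real (t\<^sup>2) * q))\<^sup>2" for t
  proof -
    define x where "x = x0 + complex_of_real t *s h"
    have o2: "ip x0 (complex_of_real t *s h) = 0" using orth by (simp add: ip_scale_right)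
    have nx: "(norm x)\<^sup>2 = 1 + t\<^sup>2 * (norm h)\<^sup>2"
      using norm_sq_add_orth[OF o2] x0 by (simp add: x_def norm_smult_vec power_mult_distrib)
    have qx: "qform HH x = w0 + complex_of_real t * p + complex_of_real (t\<^sup>2) * q"
      by (simp add: x_def qform_add qform_ofreal ip_x_smult ip_smult_x w0_def p_def q_def algebra_simps)
    have "crawford A B * (norm x)\<^sup>2 \<le> cmod (qform HH x)"
      using crawford_bound by (simp add: HH_def)
    moreover have "0 \<le> crawford A B * (norm x)\<^sup>2"
      using cmod_w0 by (metis norm_ge_zero zero_le_mult_iff zero_le_power2)
    ultimately have "(crawford A B * (norm x)\<^sup>2)\<^sup>2 \<le> (cmod (qform HH x))\<^sup>2"
      by (rule power_mono)
    then show ?thesis by (simp add: nx qx power_mult_distrib)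
  qed
  have ineq2: "((Re w0)\<^sup>2 + (Im w0)\<^sup>2) * (1 + t\<^sup>2 * (norm h)\<^sup>2)\<^sup>2
     \<le> (Re w0 + t * Re p + t\<^sup>2 * Re q)\<^sup>2 + (Im w0 + t * Im p + t\<^sup>2 * Im q)\<^sup>2" for t
    using ineq[of t] by (simp add: cmod_w0[symmetric] cmod_sq)
  from quartic[OF ineq2] have r: "Re w0 * Re p + Im w0 * Im p = 0"
     "0 \<le> (Re p)\<^sup>2 + (Im p)\<^sup>2 + 2 * (Re w0 * Re q + Im w0 * Im q) - 2 * ((Re w0)\<^sup>2 + (Im w0)\<^sup>2) * (norm h)\<^sup>2"
    by auto
  show ?thesis
    using r by (simp add: p_def[symmetric] q_def[symmetric] cmod_sq cmod_w0[symmetric])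
qed

lemma w0_nz: "0 < crawford A B \<Longrightarrow> w0 \<noteq> 0" using cmod_w0 by auto

lemma orth_pos:
  assumes g: "0 < crawford A B" and orth: "ip x0 h = 0"
  shows "(crawford A B)\<^sup>2 * (norm h)\<^sup>2 \<le> Re (cnj w0 * qform HH h)"
proof -
  define \<alpha> where "\<alpha> = ip x0 (HH *v h)"
  define \<beta> where "\<beta> = ip h (HH *v x0)"
  define u where "u = cnj w0 * \<alpha>"
  define v where "v = cnj w0 * \<beta>"
  define d where "d = u - cnj v"
  define \<omega> where "\<omega> = (if d = 0 then 1 else cnj d / complex_of_real (cmod d))"
  have \<omega>1: "cmod \<omega> = 1" by (simp add: \<omega>_def norm_divide)
  have \<omega>d: "Im (\<omega> * d) = 0"
  proof (cases "d = 0")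
    case True then show ?thesis by (simp add: \<omega>_def)
  next
    case False
    have "\<omega> * d = (cnj d * d) / complex_of_real (cmod d)" using False by (simp add: \<omega>_def)
    also have "cnj d * d = complex_of_real ((cmod d)\<^sup>2)" by (metis complex_norm_square mult.commute)
    finally show ?thesis by (simp add: Im_divide_of_real)
  qed
  define h' where "h' = \<omega> *s h"
  have o: "ip x0 h' = 0" using orth by (simp add: h'_def ip_scale_right)
  note fs = first_second[OF o]
  have p': "ip x0 (HH *v h') + ip h' (HH *v x0) = \<omega> * \<alpha> + cnj \<omega> * \<beta>"
    by (simp add: h'_def ip_x_smult ip_smult_x \<alpha>_def \<beta>_def)
  have cp: "cnj w0 * (ip x0 (HH *v h') + ip h' (HH *v x0)) = \<omega> * u + cnj \<omega> * v"
    by (subst p') (simp add: u_def v_def algebra_simps)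
  have "Im (\<omega> * u + cnj \<omega> * v) = Im (\<omega> * d)"
  proof -
    have "Im (cnj \<omega> * v) = - Im (\<omega> * cnj v)"
      by (simp add: algebra_simps)
    then show ?thesis by (simp add: d_def right_diff_distrib)
  qed
  then have "cnj w0 * (ip x0 (HH *v h') + ip h' (HH *v x0)) = 0"
    using fs cp \<omega>d by (simp add: complex_eq_iff)
  then have p0: "ip x0 (HH *v h') + ip h' (HH *v x0) = 0" using w0_nz[OF g] by simp
  have q': "qform HH h' = qform HH h" by (simp add: h'_def qform_smult \<omega>1)
  have n': "norm h' = norm h" by (simp add: h'_def norm_smult_vec \<omega>1)
  show ?thesis using fs p0 q' n' by simp
qed

lemma ip_x0_x0: "ip x0 x0 = 1" using x0 by (simp add: ip_self)

lemma TH: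
  assumes g: "0 < crawford A B"
  shows "(crawford A B)\<^sup>2 * (norm y)\<^sup>2 \<le> Re (cnj w0 * qform HH y)"
proof -
  define \<alpha> where "\<alpha> = ip x0 y"
  define y' where "y' = y - \<alpha> *s x0"
  have o: "ip x0 y' = 0" by (simp add: y'_def ip_diff_right ip_scale_right ip_x0_x0 \<alpha>_def)
  have ydec: "y = \<alpha> *s x0 + y'" by (simp add: y'_def)
  define h where "h = cnj \<alpha> *s y'"
  have oh: "ip x0 h = 0" using o by (simp add: h_def ip_scale_right)
  have ph: "ip x0 (HH *v h) + ip h (HH *v x0) = cnj \<alpha> * ip x0 (HH *v y') + \<alpha> * ip y' (HH *v x0)"
    by (simp add: h_def ip_x_smult ip_smult_x)
  have R0: "Re (cnj w0 * (cnj \<alpha> * ip x0 (HH *v y') + \<alpha> * ip y' (HH *v x0))) = 0"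
    using first_second[OF oh] ph by simp
  have qy: "qform HH y = complex_of_real ((cmod \<alpha>)\<^sup>2) * w0
      + (cnj \<alpha> * ip x0 (HH *v y') + \<alpha> * ip y' (HH *v x0)) + qform HH y'"
    unfolding ydec by (simp add: qform_add qform_smult ip_x_smult ip_smult_x w0_def)
  have ww: "cnj w0 * w0 = complex_of_real ((crawford A B)\<^sup>2)"
  proof -
    have "cnj w0 * w0 = complex_of_real ((cmod w0)\<^sup>2)" by (metis complex_norm_square mult.commute)
    then show ?thesis using cmod_w0 by simp
  qed
  have "Re (cnj w0 * qform HH y) = (cmod \<alpha>)\<^sup>2 * (crawford A B)\<^sup>2 + Re (cnj w0 * qform HH y')"
    using R0 unfolding qy by (simp add: distrib_left ww mult.left_commute[of "cnj w0"])
  moreover have "(crawford A B)\<^sup>2 * (norm y')\<^sup>2 \<le> Re (cnj w0 * qform HH y')"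
    by (rule orth_pos[OF g o])
  moreover have "(norm y)\<^sup>2 = (cmod \<alpha>)\<^sup>2 + (norm y')\<^sup>2"
  proof -
    have o2: "ip (\<alpha> *s x0) y' = 0" using o by (simp add: ip_scale_left)
    show ?thesis unfolding ydec using norm_sq_add_orth[OF o2] x0 by (simp add: norm_smult_vec power_mult_distrib)
  qed
  ultimately show ?thesis by (simp add: algebra_simps)
qed

end


lemma mat_mult_entry: "(mat c ** M) $ i $ j = c * M $ i $ j"
  for M :: "complex^'n^'n"
  unfolding matrix_matrix_mult_def mat_def by (simp add: ifmul)

lemma herm_add: assumes "hermitian A" "hermitian B" shows "hermitian (A + B)"
  unfolding hermitian_def
proof (intro allI)
  fix i j
  have a: "A$i$j = cnj (A$j$i)" and b: "B$i$j = cnj (B$j$i)" using assms unfolding hermitian_def by blast+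
  show "(A + B)$i$j = cnj ((A + B)$j$i)" by (simp only: vector_add_component complex_cnj_add a b)
qed
lemma herm_diff: assumes "hermitian A" "hermitian B" shows "hermitian (A - B)"
  unfolding hermitian_def
proof (intro allI)
  fix i j
  have a: "A$i$j = cnj (A$j$i)" and b: "B$i$j = cnj (B$j$i)" using assms unfolding hermitian_def by blast+
  show "(A - B)$i$j = cnj ((A - B)$j$i)" by (simp only: vector_minus_component complex_cnj_diff a b)
qed
lemma herm_scal: "hermitian A \<Longrightarrow> hermitian (mat (complex_of_real r) ** A)"
  unfolding hermitian_def by (metis mat_mult_entry complex_cnj_mult complex_cnj_complex_of_real)

lemma qform_real_eq: "hermitian M \<Longrightarrow> qform M x = complex_of_real (Re (qform M x))"
  using qform_real complex_is_Real_iff by (metis complex_eq_iff Im_complex_of_real Re_complex_of_real)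

lemma pos_comb:
  fixes A B :: "complex^'n^'n"
  assumes hA: "hermitian A" and hB: "hermitian B" and g: "0 < crawford A B"
  shows "\<exists>s c. s\<^sup>2 + c\<^sup>2 = 1 \<and>
     (\<forall>y. crawford A B * (norm y)\<^sup>2 \<le> Re (qform (mat (complex_of_real s) ** A + mat (complex_of_real c) ** B) y))"
proof -
  obtain x0 where x0: "norm x0 = 1" "cmod (qform (A + mat \<i> ** B) x0) = crawford A B"
    using crawford_attained by blast
  define w where "w = w0 A B x0"
  define \<gamma> where "\<gamma> = crawford A B"
  have cw: "cmod w = \<gamma>" using cmod_w0[OF x0] by (simp add: w_def \<gamma>_def)
  define s where "s = Re w / \<gamma>"
  define c where "c = Im w / \<gamma>"
  have sc: "s\<^sup>2 + c\<^sup>2 = 1"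
  proof -
    have "(Re w)\<^sup>2 + (Im w)\<^sup>2 = \<gamma>\<^sup>2" using cw by (simp add: cmod_sq[symmetric])
    then show ?thesis using g by (simp add: s_def c_def power_divide \<gamma>_def add_divide_distrib[symmetric])
  qed
  have "\<gamma> * (norm y)\<^sup>2 \<le> Re (qform (mat (complex_of_real s) ** A + mat (complex_of_real c) ** B) y)" for y
  proof -
    have th: "\<gamma>\<^sup>2 * (norm y)\<^sup>2 \<le> Re (cnj w * qform (HH A B) y)"
      using TH[OF x0 g] by (simp add: w_def \<gamma>_def)
    have qa: "qform A y = complex_of_real (Re (qform A y))" by (rule qform_real_eq[OF hA])
    have qb: "qform B y = complex_of_real (Re (qform B y))" by (rule qform_real_eq[OF hB])
    have e1: "Re (cnj w * qform (HH A B) y) = Re w * Re (qform A y) + Im w * Re (qform B y)"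
    proof -
      have hh: "qform (HH A B) y = qform A y + \<i> * qform B y" by (simp add: HH_def[OF x0] qform_H)
      show ?thesis unfolding hh by (subst qa, subst qb) simp
    qed
    have e2: "Re (qform (mat (complex_of_real s) ** A + mat (complex_of_real c) ** B) y)
        = s * Re (qform A y) + c * Re (qform B y)"
      by (simp add: qform_ip matrix_vector_mult_add_rdistrib mat_mult_mv ip_add_right ip_scale_right)
    have "\<gamma>\<^sup>2 * (norm y)\<^sup>2 \<le> \<gamma> * (s * Re (qform A y) + c * Re (qform B y))"
      using th e1 g by (simp add: s_def c_def \<gamma>_def algebra_simps)
    then show ?thesis using g e2 by (simp add: power2_eq_square \<gamma>_def mult.assoc)
  qed
  then show ?thesis using sc by (auto simp: \<gamma>_def)
qed


lemma Re_ip_herm_swap: "hermitian P \<Longrightarrow> Re (ip a (P *v b)) = Re (ip b (P *v a))"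
proof -
  assume h: "hermitian P"
  have "ip a (P *v b) = cnj (ip b (P *v a))" by (metis cnj_ip ip_herm[OF h])
  then show ?thesis by simp
qed

context
  fixes P M :: "complex^'n^'n" and g :: real
  assumes hP: "hermitian P" and hM: "hermitian M" and g: "0 < g"
    and Ppos: "\<And>y. g * (norm y)\<^sup>2 \<le> Re (qform P y)"
begin

lemma P_inj: assumes "P *v y = 0" shows "y = 0"
proof -
  have "g * (norm y)\<^sup>2 \<le> 0" using Ppos[of y] assms by (simp add: qform_ip)
  then show ?thesis using g by (simp add: mult_le_0_iff)
qed

lemma P_inv: "\<exists>N. P ** N = mat 1 \<and> N ** P = mat 1"
proof -
  have "inj ((*v) P)"
  proof (rule injI)
    fix x y assume "P *v x = P *v y"
    then have "P *v (x - y) = 0" by (simp add: matrix_vector_mult_diff_distrib)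
    then show "x = y" using P_inj[of "x - y"] by simp
  qed
  then have "det (matrix ((*v) P)) \<noteq> 0"
    using det_nz_iff_inj_gen[of "(*v) P"] by simp
  then have "invertible P" by (simp add: invertible_det_nz)
  then show ?thesis unfolding invertible_def by blast
qed

lemma rayleigh:
  "\<exists>\<mu> y. y \<noteq> 0 \<and> M *v y = complex_of_real \<mu> *s (P *v y)
      \<and> (\<forall>u. g\<^sup>2 * \<mu>\<^sup>2 * (norm u)\<^sup>2 \<le> (norm (M *v u))\<^sup>2)"
proof -
  obtain N where PN: "P ** N = mat 1" using P_inv by blast
  define T where "T = N ** M"
  have PT: "P *v (T *v u) = M *v u" for u
    by (simp add: T_def matrix_vector_mul_assoc matrix_mul_assoc PN)
  have bT: "ip (T *v x) (P *v y) = ip x (M *v y)" for x y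
    by (metis PT hM hP ip_herm)
  define Q where "Q u = Re (qform P u)" for u
  have Qge: "g * (norm u)\<^sup>2 \<le> Q u" for u using Ppos by (simp add: Q_def)
  have Qpos: "u \<noteq> 0 \<Longrightarrow> 0 < Q u" for u
    using Qge[of u] g by (smt (verit) mult_pos_pos zero_less_norm_iff zero_less_power)
  have Qsm: "Q (c *s u) = (cmod c)\<^sup>2 * Q u" for c u by (simp add: Q_def qform_smult)
  have Q0: "Q 0 = 0" by (simp add: Q_def qform_ip)
  define R where "R u = Q (T *v u) / Q u" for u
  have contQ: "continuous_on S Q" for S
    unfolding Q_def by (intro continuous_intros continuous_qform)
  have contQT: "continuous_on S (\<lambda>u. Q (T *v u))" for S
    by (rule continuous_on_compose2[OF contQ linear_continuous_on[OF matrix_vector_mul_bounded_linear]]) auto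
  have "continuous_on (sphere 0 1) R"
    unfolding R_def
  proof (intro continuous_on_divide contQ contQT ballI)
    fix u :: "complex^'n" assume "u \<in> sphere 0 1"
    then have "u \<noteq> 0" by auto
    then show "Q u \<noteq> 0" using Qpos by force
  qed
  moreover have "sphere (0::complex^'n) 1 \<noteq> {}" using unit_exists by auto
  ultimately obtain u0 where u0: "u0 \<in> sphere 0 1" "\<forall>y\<in>sphere 0 1. R u0 \<le> R y"
    using continuous_attains_inf[OF compact_sphere] by blast
  have u0nz: "u0 \<noteq> 0" using u0 by auto
  define s2 where "s2 = R u0"
  have glob: "s2 * Q u \<le> Q (T *v u)" for u
  proof (cases "u = 0")
    case True then show ?thesis by (simp add: Q0)
  next
    case False
    define k where "k = 1 / norm u"
    have kp: "0 < k" using False by (simp add: k_def)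
    define v where "v = complex_of_real k *s u"
    have "v \<in> sphere 0 1" using normalize_vec[OF False] by (simp add: v_def k_def)
    then have "s2 \<le> R v" using u0 by (simp add: s2_def)
    also have "R v = R u"
      using kp by (simp add: R_def v_def mv_smult Qsm)
    finally show ?thesis using Qpos[OF False] by (simp add: R_def pos_le_divide_eq)
  qed
  have s2nn: "0 \<le> s2"
  proof -
    have "0 \<le> Q (T *v u0)" using Qge[of "T *v u0"] g by (smt (verit) mult_nonneg_nonneg zero_le_power2)
    then show ?thesis using Qpos[OF u0nz] by (simp add: s2_def R_def)
  qed
  have fu0: "Q (T *v u0) - s2 * Q u0 = 0"
    using Qpos[OF u0nz] by (simp add: s2_def R_def)
  define d where "d = T *v (T *v u0) - complex_of_real s2 *s u0"
  have var: "Re (ip h (P *v d)) = 0" for h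
  proof -
    define c1 where "c1 = 2 * (Re (ip (T *v h) (P *v (T *v u0))) - s2 * Re (ip h (P *v u0)))"
    define c2 where "c2 = Q (T *v h) - s2 * Q h"
    have "0 \<le> c1 * t + c2 * t^2 + 0 * t^3 + 0 * t^4" for t
    proof -
      define x where "x = u0 + complex_of_real t *s h"
      have e1: "Q (T *v x) = Q (T *v u0) + t * (2 * Re (ip (T *v h) (P *v (T *v u0)))) + t\<^sup>2 * Q (T *v h)"
      proof -
        have "Q (T *v x) = Re (qform P (T *v u0)) + Re (ip (T *v u0) (P *v (complex_of_real t *s (T *v h))))
           + Re (ip (complex_of_real t *s (T *v h)) (P *v (T *v u0))) + Re (qform P (complex_of_real t *s (T *v h)))"
          by (simp add: Q_def x_def matrix_vector_right_distrib mv_smult qform_add)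
        also have "\<dots> = Q (T *v u0) + t * (2 * Re (ip (T *v h) (P *v (T *v u0)))) + t\<^sup>2 * Q (T *v h)"
          using Re_ip_herm_swap[OF hP, of "T *v u0" "T *v h"]
          by (simp add: Q_def ip_scale_left mv_smult ip_scale_right qform_smult algebra_simps)
        finally show ?thesis .
      qed
      have e2: "Q x = Q u0 + t * (2 * Re (ip h (P *v u0))) + t\<^sup>2 * Q h"
      proof -
        have "Q x = Re (qform P u0) + Re (ip u0 (P *v (complex_of_real t *s h)))
           + Re (ip (complex_of_real t *s h) (P *v u0)) + Re (qform P (complex_of_real t *s h))"
          by (simp add: Q_def x_def qform_add)
        also have "\<dots> = Q u0 + t * (2 * Re (ip h (P *v u0))) + t\<^sup>2 * Q h"
          using Re_ip_herm_swap[OF hP, of u0 h]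
          by (simp add: Q_def ip_scale_left mv_smult ip_scale_right qform_smult algebra_simps)
        finally show ?thesis .
      qed
      have "0 \<le> Q (T *v x) - s2 * Q x" using glob[of x] by simp
      also have "Q (T *v x) - s2 * Q x = (Q (T *v u0) - s2 * Q u0) + c1 * t + c2 * t^2"
        unfolding e1 e2 c1_def c2_def by (simp add: algebra_simps)
      finally show ?thesis using fu0 by simp
    qed
    from poly_nonneg[OF this] have "c1 = 0" by simp
    moreover have "Re (ip (T *v h) (P *v (T *v u0))) = Re (ip h (P *v (T *v (T *v u0))))"
      by (metis bT PT)
    ultimately show ?thesis
      by (simp add: c1_def d_def matrix_vector_mult_diff_distrib mv_smult ip_diff_right ip_scale_right)
  qed
  have "d = 0"
  proof -
    have "g * (norm d)\<^sup>2 \<le> 0" using Ppos[of d] var[of d] by (simp add: qform_ip)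
    then show ?thesis using g by (simp add: mult_le_0_iff)
  qed
  then have TT: "T *v (T *v u0) = complex_of_real s2 *s u0" by (simp add: d_def)
  define \<sigma> where "\<sigma> = sqrt s2"
  have ss: "\<sigma> * \<sigma> = s2" using s2nn by (simp add: \<sigma>_def)
  define w where "w = T *v u0"
  obtain \<mu> y where y: "y \<noteq> 0" "T *v y = complex_of_real \<mu> *s y" and mu2: "\<mu>\<^sup>2 = s2"
  proof (cases "w + complex_of_real \<sigma> *s u0 = 0")
    case False
    have "T *v (w + complex_of_real \<sigma> *s u0) = complex_of_real \<sigma> *s (w + complex_of_real \<sigma> *s u0)"
      using TT ss by (simp add: w_def matrix_vector_right_distrib mv_smult vector_smult_assoc
          vector_add_ldistrib algebra_simps flip: of_real_mult)
    then show ?thesis using that[of "w + complex_of_real \<sigma> *s u0" \<sigma>] False ss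
      by (simp add: power2_eq_square)
  next
    case True
    then have "T *v u0 = complex_of_real (- \<sigma>) *s u0"
      by (simp add: w_def add_eq_0_iff vector_smult_lneg)
    then show ?thesis using that[of u0 "- \<sigma>"] u0nz ss by (simp add: power2_eq_square)
  qed
  have My: "M *v y = complex_of_real \<mu> *s (P *v y)"
    by (metis PT y(2) mv_smult)
  have bound: "g\<^sup>2 * \<mu>\<^sup>2 * (norm u)\<^sup>2 \<le> (norm (M *v u))\<^sup>2" for u
  proof -
    define v where "v = T *v u"
    have key: "g * Q v \<le> (norm (P *v v))\<^sup>2"
    proof (cases "v = 0")
      case True then show ?thesis by (simp add: Q0)
    next
      case False
      have "Q v \<le> cmod (ip v (P *v v))" by (simp add: Q_def qform_ip complex_Re_le_cmod)
      also have "\<dots> \<le> norm v * norm (P *v v)" by (rule ip_cauchy)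
      finally have qv: "Q v \<le> norm v * norm (P *v v)" .
      have "g * (norm v)\<^sup>2 \<le> norm v * norm (P *v v)" using Qge[of v] qv by linarith
      then have "g * norm v \<le> norm (P *v v)" using False by (simp add: power2_eq_square)
      then have "g * Q v \<le> g * (norm v * norm (P *v v))" using qv g by simp
      also have "\<dots> = (g * norm v) * norm (P *v v)" by simp
      also have "\<dots> \<le> norm (P *v v) * norm (P *v v)" using \<open>g * norm v \<le> norm (P *v v)\<close>
        by (intro mult_right_mono) auto
      finally show ?thesis by (simp add: power2_eq_square)
    qed
    have "g\<^sup>2 * \<mu>\<^sup>2 * (norm u)\<^sup>2 = g * s2 * (g * (norm u)\<^sup>2)" unfolding mu2[symmetric] by (simp add: power2_eq_square)
    also have "\<dots> \<le> g * s2 * Q u" using Qge[of u] g s2nn by (intro mult_left_mono) auto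
    also have "\<dots> \<le> g * Q v" using glob[of u] g by (simp add: v_def mult.assoc)
    also have "\<dots> \<le> (norm (M *v u))\<^sup>2" using key by (simp add: v_def PT)
    finally show ?thesis .
  qed
  show ?thesis using y My bound by blast
qed

end


lemma det_zero_of_kernel:
  fixes M :: "complex^'n^'n"
  assumes "y \<noteq> 0" "M *v y = 0" shows "det M = 0"
proof (rule ccontr)
  assume "det M \<noteq> 0"
  then have "inj ((*v) M)" using det_nz_iff_inj_gen[of "(*v) M"] by simp
  then show False using assms by (metis injD matrix_vector_mult_0_right)
qed

lemma kernel_of_det_zero:
  fixes M :: "complex^'n^'n"
  assumes "det M = 0" shows "\<exists>y. y \<noteq> 0 \<and> M *v y = 0"
proof -
  have "\<not> inj ((*v) M)" using det_nz_iff_inj_gen[of "(*v) M"] assms by simp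
  then obtain a b where "a \<noteq> b" "M *v a = M *v b" unfolding inj_def by blast
  then have "a - b \<noteq> 0" "M *v (a - b) = 0" by (auto simp: matrix_vector_mult_diff_distrib)
  then show ?thesis by blast
qed

lemma cs2: fixes s c l :: real assumes "s\<^sup>2 + c\<^sup>2 = 1" shows "\<bar>s * l + c\<bar> \<le> sqrt (1 + l\<^sup>2)"
proof -
  have "(s * l + c)\<^sup>2 \<le> 1 + l\<^sup>2"
  proof -
    have "(s\<^sup>2 + c\<^sup>2) * (l\<^sup>2 + 1) - (s * l + c)\<^sup>2 = (s - c * l)\<^sup>2" by (simp add: power2_eq_square algebra_simps)
    then have "(s * l + c)\<^sup>2 = (l\<^sup>2 + 1) - (s - c * l)\<^sup>2" using assms by simp
    then show ?thesis using zero_le_power2[of "s - c * l"] by linarith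
  qed
  then have "sqrt ((s * l + c)\<^sup>2) \<le> sqrt (1 + l\<^sup>2)" by (rule real_sqrt_le_mono)
  then show ?thesis by simp
qed

lemma cs3: fixes l z :: real shows "\<bar>l - z\<bar> \<le> sqrt (1 + l\<^sup>2) * sqrt (1 + z\<^sup>2)"
proof -
  have "(1 + l\<^sup>2) * (1 + z\<^sup>2) - (l - z)\<^sup>2 = (1 + l * z)\<^sup>2" by (simp add: power2_eq_square algebra_simps)
  then have "(l - z)\<^sup>2 \<le> (1 + l\<^sup>2) * (1 + z\<^sup>2)" using zero_le_power2[of "1 + l * z"] by linarith
  then have "sqrt ((l - z)\<^sup>2) \<le> sqrt ((1 + l\<^sup>2) * (1 + z\<^sup>2))" by (rule real_sqrt_le_mono)
  then show ?thesis by (simp add: real_sqrt_mult)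
qed

lemma K:
  fixes A B :: "complex^'n^'n" and lam :: "'n \<Rightarrow> real" and z :: real
  assumes hA: "hermitian A" and hB: "hermitian B" and g: "0 < crawford A B"
    and eig: "\<forall>z. det (A - mat z ** B) = det B * (\<Prod>i\<in>UNIV. complex_of_real (lam i) - z)"
    and Binj: "\<And>y. B *v y = 0 \<Longrightarrow> y = 0"
  shows "\<exists>i. \<forall>u. crawford A B * \<bar>lam i - z\<bar> * norm u
            \<le> sqrt (1 + (lam i)\<^sup>2) * norm ((A - mat (complex_of_real z) ** B) *v u)"
proof -
  obtain s c where sc: "s\<^sup>2 + c\<^sup>2 = 1" and
    Ppos: "\<And>y. crawford A B * (norm y)\<^sup>2 \<le> Re (qform (mat (complex_of_real s) ** A + mat (complex_of_real c) ** B) y)"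
    using pos_comb[OF hA hB g] by blast
  define P where "P = mat (complex_of_real s) ** A + mat (complex_of_real c) ** B"
  define M where "M = A - mat (complex_of_real z) ** B"
  have hP: "hermitian P" unfolding P_def by (intro herm_add herm_scal hA hB)
  have hM: "hermitian M" unfolding M_def by (intro herm_diff herm_scal hA hB)
  obtain \<mu> y where y: "y \<noteq> 0" and My: "M *v y = complex_of_real \<mu> *s (P *v y)"
     and bnd: "\<And>u. (crawford A B)\<^sup>2 * \<mu>\<^sup>2 * (norm u)\<^sup>2 \<le> (norm (M *v u))\<^sup>2"
    using rayleigh[OF hP hM g Ppos[folded P_def]] by blast
  have detB: "det B \<noteq> 0"
  proof
    assume "det B = 0"
    then obtain v where "v \<noteq> 0" "B *v v = 0" using kernel_of_det_zero by blast
    then show False using Binj by blast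
  qed
  have pen: "complex_of_real (1 - \<mu> * s) *s (A *v y) = complex_of_real (z + \<mu> * c) *s (B *v y)"
  proof -
    have "A *v y - complex_of_real z *s (B *v y)
        = complex_of_real \<mu> *s (complex_of_real s *s (A *v y) + complex_of_real c *s (B *v y))"
      using My by (simp add: M_def P_def matrix_vector_mult_diff_rdistrib matrix_vector_mult_add_rdistrib mat_mult_mv)
    then show ?thesis
      by (simp add: vec_eq_iff algebra_simps)
  qed
  have ex: "\<exists>i. \<bar>lam i - z\<bar> \<le> \<bar>\<mu>\<bar> * sqrt (1 + (lam i)\<^sup>2)"
  proof (cases "1 - \<mu> * s = 0")
    case False
    define l where "l = (z + \<mu> * c) / (1 - \<mu> * s)"
    have "A *v y = complex_of_real l *s (B *v y)"
    proof -
      have "A *v y = complex_of_real (1 / (1 - \<mu> * s)) *s (complex_of_real (1 - \<mu> * s) *s (A *v y))"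
      proof -
        have "complex_of_real (1 / (1 - \<mu> * s)) * complex_of_real (1 - \<mu> * s) = 1"
          using False by (simp only: of_real_mult[symmetric]) simp
        then show ?thesis by (simp only: vector_smult_assoc vector_smult_lid)
      qed
      also have "\<dots> = complex_of_real l *s (B *v y)"
      proof -
        have "complex_of_real (1 / (1 - \<mu> * s)) * complex_of_real (z + \<mu> * c) = complex_of_real l"
          by (simp only: of_real_mult[symmetric]) (simp add: l_def)
        then show ?thesis unfolding pen by (simp only: vector_smult_assoc)
      qed
      finally show ?thesis .
    qed
    then have "(A - mat (complex_of_real l) ** B) *v y = 0"
      by (simp add: matrix_vector_mult_diff_rdistrib mat_mult_mv)
    then have "det (A - mat (complex_of_real l) ** B) = 0" using det_zero_of_kernel y by blast
    then have "(\<Prod>i\<in>UNIV. complex_of_real (lam i) - complex_of_real l) = 0"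
      using eig detB by simp
    then obtain i where "complex_of_real (lam i) - complex_of_real l = 0" by auto
    then have li: "lam i = l" by simp
    have "lam i - z = \<mu> * (s * lam i + c)"
      using False by (simp add: li l_def field_simps)
    then have "\<bar>lam i - z\<bar> = \<bar>\<mu>\<bar> * \<bar>s * lam i + c\<bar>" by (simp add: abs_mult)
    also have "\<dots> \<le> \<bar>\<mu>\<bar> * sqrt (1 + (lam i)\<^sup>2)" by (intro mult_left_mono cs2 sc) auto
    finally show ?thesis by blast
  next
    case True
    have "complex_of_real (z + \<mu> * c) *s (B *v y) = 0" using pen True by simp
    then have zc: "z + \<mu> * c = 0"
    proof -
      have "B *v y \<noteq> 0" using Binj y by blast
      then show ?thesis using \<open>complex_of_real (z + \<mu> * c) *s (B *v y) = 0\<close>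
        by (metis (no_types, lifting) of_real_eq_0_iff vector_mul_eq_0)
    qed
    have "1 + z\<^sup>2 = \<mu>\<^sup>2"
    proof -
      have "z = - (\<mu> * c)" using zc by simp
      then have "1 + z\<^sup>2 = (\<mu> * s)\<^sup>2 + (\<mu> * c)\<^sup>2" using True by (simp add: power2_eq_square)
      also have "\<dots> = \<mu>\<^sup>2 * (s\<^sup>2 + c\<^sup>2)" by (simp add: power2_eq_square algebra_simps)
      finally show ?thesis using sc by simp
    qed
    then have "sqrt (1 + z\<^sup>2) = \<bar>\<mu>\<bar>" by simp
    then have "\<bar>lam i - z\<bar> \<le> \<bar>\<mu>\<bar> * sqrt (1 + (lam i)\<^sup>2)" for i
      using cs3[of "lam i" z] by (simp add: mult.commute)
    then show ?thesis by blast
  qed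
  then obtain i where i: "\<bar>lam i - z\<bar> \<le> \<bar>\<mu>\<bar> * sqrt (1 + (lam i)\<^sup>2)" by blast
  have "crawford A B * \<bar>lam i - z\<bar> * norm u \<le> sqrt (1 + (lam i)\<^sup>2) * norm (M *v u)" for u
  proof -
    have "(crawford A B * \<bar>\<mu>\<bar> * norm u)\<^sup>2 \<le> (norm (M *v u))\<^sup>2"
      using bnd[of u] by (simp add: power_mult_distrib)
    then have m: "crawford A B * \<bar>\<mu>\<bar> * norm u \<le> norm (M *v u)"
      by (rule power2_le_imp_le) simp
    have "crawford A B * \<bar>lam i - z\<bar> * norm u \<le> crawford A B * (\<bar>\<mu>\<bar> * sqrt (1 + (lam i)\<^sup>2)) * norm u"
      using i g by (intro mult_right_mono mult_left_mono) auto
    also have "\<dots> = sqrt (1 + (lam i)\<^sup>2) * (crawford A B * \<bar>\<mu>\<bar> * norm u)" by simp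
    also have "\<dots> \<le> sqrt (1 + (lam i)\<^sup>2) * norm (M *v u)" using m by (intro mult_left_mono) auto
    finally show ?thesis .
  qed
  then show ?thesis unfolding M_def by blast
qed


lemma norm2_smat: "norm2 (mat (complex_of_real r)) \<le> \<bar>r\<bar>"
proof (rule norm2_le)
  fix x :: "complex^'a"
  have "mat (complex_of_real r) *v x = complex_of_real r *s x"
    by (simp add: vec_eq_iff matrix_vector_mult_def mat_def ifmul)
  then show "norm (mat (complex_of_real r) *v x) \<le> \<bar>r\<bar> * norm x" by (simp add: norm_smult_vec)
qed

lemma herm_smat: "hermitian (mat (complex_of_real r))"
  unfolding hermitian_def mat_def by simp

lemma householder:
  fixes y v :: "complex^'n"
  assumes y1: "norm y = 1" and real: "ip y v \<in> \<real>"
  shows "\<exists>E. hermitian E \<and> E *v y = v \<and> norm2 E \<le> norm v"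
proof (cases "v = 0")
  case True
  have "hermitian (0::complex^'n^'n)" by (simp add: hermitian_def)
  moreover have "norm2 (0::complex^'n^'n) \<le> 0" by (rule norm2_le) simp
  ultimately show ?thesis using True by (intro exI[of _ 0]) simp
next
  case False
  define nv where "nv = norm v"
  have nvp: "0 < nv" using False by (simp add: nv_def)
  define vn where "vn = complex_of_real (1 / nv) *s v"
  have vn1: "norm vn = 1" using normalize_vec[OF False] by (simp add: vn_def nv_def)
  have vrec: "complex_of_real nv *s vn = v"
  proof -
    have "complex_of_real nv * complex_of_real (1 / nv) = 1" using nvp by (simp only: of_real_mult[symmetric]) simp
    then show ?thesis by (simp only: vn_def vector_smult_assoc vector_smult_lid)
  qed
  define \<rho> where "\<rho> = ip vn y"
  have \<rho>r: "\<rho> \<in> \<real>"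
  proof -
    have e1: "\<rho> = cnj (complex_of_real (1 / nv)) * ip v y" by (simp add: \<rho>_def vn_def ip_scale_left)
    have e2: "ip v y = cnj (ip y v)" by (rule cnj_ip[symmetric])
    have e: "\<rho> = cnj (complex_of_real (1 / nv) * ip y v)" unfolding e1 e2 by (simp only: complex_cnj_mult)
    have r1: "complex_of_real (1 / nv) * ip y v \<in> \<real>" using real by (intro Reals_mult) auto
    then have cc: "cnj (complex_of_real (1 / nv) * ip y v) = complex_of_real (1 / nv) * ip y v" using Reals_cnj_iff by blast
    show ?thesis unfolding e cc by (rule r1)
  qed
  have \<rho>c: "ip y vn = \<rho>" using \<rho>r by (metis Reals_cnj_iff cnj_ip \<rho>_def)
  have yy: "ip y y = 1" using y1 by (simp add: ip_self)
  have vv: "ip vn vn = 1" using vn1 by (simp add: ip_self)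
  define d where "d = y - vn"
  show ?thesis
  proof (cases "d = 0")
    case True
    then have "y = vn" by (simp add: d_def)
    then show ?thesis using norm2_smat[of nv] herm_smat[of nv] vrec nvp
      by (intro exI[of _ "mat (complex_of_real nv)"]) (simp add: nv_def[symmetric] vec_eq_iff matrix_vector_mult_def mat_def ifmul)
  next
    case dnz: False
    define nd where "nd = norm d"
    have ndp: "0 < nd" using dnz by (simp add: nd_def)
    define w where "w = complex_of_real (1 / nd) *s d"
    have w1: "ip w w = 1" using normalize_vec[OF dnz] by (simp add: w_def nd_def ip_self)
    define E where "E = (\<chi> i j. complex_of_real nv * ((if i = j then 1 else 0) - 2 * w$i * cnj (w$j)))"
    have Ex: "E *v x = complex_of_real nv *s (x - (2 * ip w x) *s w)" for x
    proof -
      have "(E *v x) $ i = complex_of_real nv * (x $ i - 2 * ip w x * w $ i)" for i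
      proof -
        have "(E *v x) $ i = (\<Sum>j\<in>UNIV. complex_of_real nv * ((if i = j then 1 else 0) * x$j) - complex_of_real nv * 2 * w$i * (cnj (w$j) * x$j))"
          by (simp add: E_def matrix_vector_mult_def algebra_simps)
        also have "\<dots> = complex_of_real nv * x$i - complex_of_real nv * 2 * w$i * ip w x"
          by (simp add: sum_subtractf sum_distrib_left[symmetric] ip_def ifmul)
        finally show ?thesis by (simp add: algebra_simps)
      qed
      then show ?thesis by (simp add: vec_eq_iff algebra_simps)
    qed
    have hE: "hermitian E"
      unfolding hermitian_def E_def by (simp add: mult.commute mult.left_commute)
    have nE: "norm2 E \<le> nv"
    proof (rule norm2_le)
      fix x
      define \<beta> where "\<beta> = ip w x"
      have xw: "ip x w = cnj \<beta>" by (simp add: \<beta>_def cnj_ip)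
      have "ip (x - (2 * \<beta>) *s w) (x - (2 * \<beta>) *s w) = ip x x"
        by (simp add: ip_diff_left ip_diff_right ip_scale_left ip_scale_right xw w1 \<beta>_def[symmetric] algebra_simps)
      then have "norm (x - (2 * \<beta>) *s w) = norm x"
        by (metis ip_self norm_ge_zero of_real_eq_iff power2_eq_iff_nonneg)
      then show "norm (E *v x) \<le> nv * norm x"
        using nvp unfolding Ex norm_smult_vec \<beta>_def[symmetric] by simp
    qed
    have Ey: "E *v y = v"
    proof -
      have dy: "ip d y = 1 - \<rho>" by (simp add: d_def ip_diff_left yy \<rho>_def)
      have dd: "complex_of_real (nd\<^sup>2) = 2 - 2 * \<rho>"
      proof -
        have "ip d d = 2 - 2 * \<rho>" by (simp add: d_def ip_diff_left ip_diff_right yy vv \<rho>c \<rho>_def[symmetric])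
        then show ?thesis by (simp add: ip_self nd_def)
      qed
      have "(2 * ip w y) *s w = d"
      proof -
        have "(2 * ip w y) *s w = (2 * (complex_of_real (1 / nd) * (1 - \<rho>)) * complex_of_real (1 / nd)) *s d"
          by (simp add: w_def ip_scale_left dy vector_smult_assoc)
        also have "2 * (complex_of_real (1 / nd) * (1 - \<rho>)) * complex_of_real (1 / nd) = (2 - 2 * \<rho>) / complex_of_real (nd\<^sup>2)"
          by (simp add: field_simps power2_eq_square)
        also have "\<dots> = 1" using dd ndp by (metis divide_self of_real_eq_0_iff power_not_zero less_irrefl)
        finally show ?thesis by simp
      qed
      then have "y - (2 * ip w y) *s w = vn" by (simp add: d_def)
      then show ?thesis using vrec by (simp add: Ex)
    qed
    show ?thesis using hE Ey nE by (auto simp: nv_def)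
  qed
qed


lemma qform_bound: "cmod (qform E u) \<le> norm2 E * (norm u)\<^sup>2"
proof -
  have "cmod (qform E u) \<le> norm u * norm (E *v u)" unfolding qform_ip by (rule ip_cauchy)
  also have "\<dots> \<le> norm u * (norm2 E * norm u)" by (intro mult_left_mono norm2_bound) auto
  finally show ?thesis by (simp add: power2_eq_square mult_ac)
qed

lemma cs_lin: fixes x e f :: real assumes "0 \<le> e" "0 \<le> f"
  shows "\<bar>x\<bar> * f + e \<le> sqrt (1 + x\<^sup>2) * sqrt (e\<^sup>2 + f\<^sup>2)"
proof -
  have "(1 + x\<^sup>2) * (e\<^sup>2 + f\<^sup>2) - (\<bar>x\<bar> * f + e)\<^sup>2 = (\<bar>x\<bar> * e - f)\<^sup>2"
    by (simp add: power2_eq_square algebra_simps)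
  then have "(\<bar>x\<bar> * f + e)\<^sup>2 \<le> (1 + x\<^sup>2) * (e\<^sup>2 + f\<^sup>2)" using zero_le_power2[of "\<bar>x\<bar> * e - f"] by linarith
  then have "sqrt ((\<bar>x\<bar> * f + e)\<^sup>2) \<le> sqrt ((1 + x\<^sup>2) * (e\<^sup>2 + f\<^sup>2))" by (rule real_sqrt_le_mono)
  then show ?thesis using assms by (simp add: real_sqrt_mult)
qed

lemma amgm_sqrt: fixes a b :: real assumes "0 \<le> a" "0 \<le> b"
  shows "sqrt a * sqrt b \<le> (a + b) / 2"
proof -
  have "0 \<le> (sqrt a - sqrt b)\<^sup>2" by simp
  then show ?thesis using assms by (simp add: power2_eq_square algebra_simps)
qed

lemma norm2_zero_mat: "norm2 (0::complex^'n^'n) = 0"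
  using norm2_nonneg[of "0::complex^'n^'n"] norm2_le[of "0::complex^'n^'n" 0] by simp

lemma norm2_pos: assumes "A \<noteq> (0::complex^'n^'n)" shows "0 < norm2 A"
proof (rule ccontr)
  assume "\<not> 0 < norm2 A"
  then have "norm2 A = 0" using norm2_nonneg[of A] by simp
  then have "A *v x = 0 *v x" for x using norm2_bound[of A x] by simp
  then have "A = 0" using matrix_eq by blast
  then show False using assms by simp
qed

theorem theorem2p6:
  fixes A B :: "complex^'n^'n" and lam :: "'n \<Rightarrow> real" and eps :: real
  assumes "definite_pencil A B"
    and eig: "\<forall>z. det (A - mat z ** B) = det B * (\<Prod>i\<in>UNIV. complex_of_real (lam i) - z)"
    and "0 < eps" and "eps < min (sigma_min B) (crawford A B)"
  shows "(let reps = eps / crawford A B * (1 + ((norm2 A + eps) / (sigma_min B - eps))\<^sup>2);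
              r = (\<lambda>i. if A = 0 then 1 / norm2 B else max (1 / norm2 B) (\<bar>lam i\<bar> / norm2 A))
          in (\<Union>i. complex_of_real ` {lam i - eps * r i <..< lam i + eps * r i})
               \<subseteq> sym_pseudospectrum eps A B
           \<and> sym_pseudospectrum eps A B
               \<subseteq> (\<Union>i. complex_of_real ` {lam i - reps <..< lam i + reps}))"
proof -
  have hA: "hermitian A" and hB: "hermitian B" and g: "0 < crawford A B"
    using assms(1) unfolding definite_pencil_def by auto
  have ep: "0 < eps" and eS: "eps < sigma_min B" and eg: "eps < crawford A B" using assms(3,4) by auto
  define \<gamma> where "\<gamma> = crawford A B"
  define sB where "sB = sigma_min B"
  define nA where "nA = norm2 A"
  define nB where "nB = norm2 B"
  have sBp: "0 < sB" using ep eS by (simp add: sB_def)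
  have nAnn: "0 \<le> nA" by (simp add: nA_def norm2_nonneg)
  have sigB: "sB * norm y \<le> norm (B *v y)" for y by (simp add: sB_def sigma_min_bound)
  have Binj: "B *v y = 0 \<Longrightarrow> y = 0" for y
    using sigB[of y] sBp by (simp add: mult_le_0_iff)
  have eigv: "\<exists>y. norm y = 1 \<and> A *v y = complex_of_real (lam i) *s (B *v y)" for i
  proof -
    have "det (A - mat (complex_of_real (lam i)) ** B) = 0"
    proof -
      have "(\<Prod>j\<in>UNIV. complex_of_real (lam j) - complex_of_real (lam i)) = 0"
        by (rule prod_zero[of UNIV]) auto
      then show ?thesis using eig by simp
    qed
    then obtain y where y: "y \<noteq> 0" "(A - mat (complex_of_real (lam i)) ** B) *v y = 0"
      using kernel_of_det_zero by blast
    define yn where "yn = complex_of_real (1 / norm y) *s y"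
    have "norm yn = 1" using normalize_vec[OF y(1)] by (simp add: yn_def)
    moreover have "(A - mat (complex_of_real (lam i)) ** B) *v yn = 0"
      using y(2) by (simp add: yn_def mv_smult)
    then have "A *v yn = complex_of_real (lam i) *s (B *v yn)"
      by (simp add: matrix_vector_mult_diff_rdistrib mat_mult_mv)
    ultimately show ?thesis by blast
  qed
  have lam_bd: "\<bar>lam i\<bar> * sB \<le> nA" for i
  proof -
    obtain y where y: "norm y = 1" "A *v y = complex_of_real (lam i) *s (B *v y)" using eigv by blast
    have "\<bar>lam i\<bar> * sB \<le> \<bar>lam i\<bar> * norm (B *v y)" using sigB[of y] y(1) by (intro mult_left_mono) auto
    also have "\<dots> = norm (A *v y)" using y(2) by (simp add: norm_smult_vec)
    also have "\<dots> \<le> nA" using norm2_bound[of A y] y(1) by (simp add: nA_def)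
    finally show ?thesis .
  qed
  define Mb where "Mb = (nA + eps) / (sB - eps)"
  have sBe: "0 < sB - eps" using eS by (simp add: sB_def)
  have Mbp: "0 < Mb" using nAnn ep sBe by (simp add: Mb_def)
  have lam_lt: "\<bar>lam i\<bar> < Mb" for i
  proof -
    have "\<bar>lam i\<bar> \<le> nA / sB" using lam_bd[of i] sBp by (simp add: pos_le_divide_eq)
    also have "nA / sB \<le> nA / (sB - eps)" using nAnn sBe ep by (intro divide_left_mono) auto
    also have "\<dots> < Mb" unfolding Mb_def using sBe ep by (intro divide_strict_right_mono) auto
    finally show ?thesis .
  qed
  define reps where "reps = eps / \<gamma> * (1 + Mb\<^sup>2)"
  have up: "\<exists>i. z \<in> complex_of_real ` {lam i - reps <..< lam i + reps}"
    if zin: "z \<in> sym_pseudospectrum eps A B" for z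
  proof -
    obtain u E F where u: "u \<noteq> 0" and hE: "hermitian E" and hF: "hermitian F"
      and nEF: "sqrt ((norm2 E)\<^sup>2 + (norm2 F)\<^sup>2) \<le> eps"
      and eq: "(A + E) *v u = z *s ((B + F) *v u)"
      using zin unfolding sym_pseudospectrum_def by blast
    define nE where "nE = norm2 E"
    define nF where "nF = norm2 F"
    have nEnn: "0 \<le> nE" and nFnn: "0 \<le> nF" by (simp_all add: nE_def nF_def norm2_nonneg)
    have nEF': "sqrt (nE\<^sup>2 + nF\<^sup>2) \<le> eps" using nEF by (simp add: nE_def nF_def)
    have "sqrt (nE\<^sup>2) \<le> sqrt (nE\<^sup>2 + nF\<^sup>2)" by (rule real_sqrt_le_mono) simp
    then have "nE \<le> sqrt (nE\<^sup>2 + nF\<^sup>2)" using nEnn by simp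
    then have nEe: "nE \<le> eps" using nEF' by linarith
    have "sqrt (nF\<^sup>2) \<le> sqrt (nE\<^sup>2 + nF\<^sup>2)" by (rule real_sqrt_le_mono) simp
    then have "nF \<le> sqrt (nE\<^sup>2 + nF\<^sup>2)" using nFnn by simp
    then have nFe: "nF \<le> eps" using nEF' by linarith
    have up0: "0 < norm u" using u by simp
    have qeq: "qform (A + E) u = z * qform (B + F) u"
      by (simp add: qform_ip eq ip_scale_right)
    have qAE: "qform (A + E) u = qform A u + qform E u"
      by (simp add: qform_ip matrix_vector_mult_add_rdistrib ip_add_right)
    have qBF: "qform (B + F) u = qform B u + qform F u"
      by (simp add: qform_ip matrix_vector_mult_add_rdistrib ip_add_right)
    have rA: "qform A u \<in> \<real>" and rB: "qform B u \<in> \<real>" and rE: "qform E u \<in> \<real>" and rF: "qform F u \<in> \<real>"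
      using qform_real hA hB hE hF by blast+
    have bnz: "qform (B + F) u \<noteq> 0"
    proof
      assume b0: "qform (B + F) u = 0"
      then have a0: "qform (A + E) u = 0" using qeq by simp
      have "qform (A + mat \<i> ** B) u = - (qform E u + \<i> * qform F u)"
      proof -
        have e1: "qform A u = - qform E u" using a0 qAE by (simp add: eq_neg_iff_add_eq_0)
        have e2: "qform B u = - qform F u" using b0 qBF by (simp add: eq_neg_iff_add_eq_0)
        show ?thesis unfolding qform_H e1 e2 by (simp add: algebra_simps)
      qed
      then have c1: "cmod (qform (A + mat \<i> ** B) u) = cmod (qform E u + \<i> * qform F u)" by (metis norm_minus_cancel)
      have "qform E u + \<i> * qform F u = Complex (Re (qform E u)) (Re (qform F u))"
        using rE rF by (simp add: complex_eq_iff complex_is_Real_iff)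
      then have c2: "cmod (qform E u + \<i> * qform F u) = sqrt ((Re (qform E u))\<^sup>2 + (Re (qform F u))\<^sup>2)"
        by (simp add: cmod_def)
      have bE: "\<bar>Re (qform E u)\<bar> \<le> nE * (norm u)\<^sup>2"
        using qform_bound[of E u] abs_Re_le_cmod[of "qform E u"] by (simp add: nE_def)
      have bF: "\<bar>Re (qform F u)\<bar> \<le> nF * (norm u)\<^sup>2"
        using qform_bound[of F u] abs_Re_le_cmod[of "qform F u"] by (simp add: nF_def)
      have "(Re (qform E u))\<^sup>2 + (Re (qform F u))\<^sup>2 \<le> (nE * (norm u)\<^sup>2)\<^sup>2 + (nF * (norm u)\<^sup>2)\<^sup>2"
        using bE bF by (intro add_mono; metis abs_le_square_iff abs_of_nonneg abs_ge_zero order_trans power2_abs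
              abs_le_square_iff[symmetric]) 
      also have "\<dots> = (nE\<^sup>2 + nF\<^sup>2) * ((norm u)\<^sup>2)\<^sup>2" by (simp add: power_mult_distrib algebra_simps)
      finally have "sqrt ((Re (qform E u))\<^sup>2 + (Re (qform F u))\<^sup>2) \<le> sqrt (nE\<^sup>2 + nF\<^sup>2) * (norm u)\<^sup>2"
        by (metis real_sqrt_le_mono real_sqrt_mult real_sqrt_pow2 zero_le_power2 real_sqrt_abs abs_of_nonneg)
      also have "\<dots> \<le> eps * (norm u)\<^sup>2" using nEF by (intro mult_right_mono) (auto simp: nE_def nF_def)
      also have "\<dots> < \<gamma> * (norm u)\<^sup>2" using eg up0 by (simp add: \<gamma>_def)
      also have "\<dots> \<le> cmod (qform (A + mat \<i> ** B) u)" using crawford_bound by (simp add: \<gamma>_def)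
      finally show False using c1 c2 by simp
    qed
    define x where "x = Re (qform (A + E) u) / Re (qform (B + F) u)"
    have rAE: "qform (A + E) u \<in> \<real>" using rA rE qAE by (simp add: Reals_add)
    have rBF: "qform (B + F) u \<in> \<real>" using rB rF qBF by (simp add: Reals_add)
    have zx: "z = complex_of_real x"
    proof -
      have "z = qform (A + E) u / qform (B + F) u" using qeq bnz by simp
      also have "\<dots> = complex_of_real x" using rAE rBF
        by (metis Reals_cases Re_complex_of_real of_real_divide x_def)
      finally show ?thesis .
    qed
    have eq2: "A *v u + E *v u = complex_of_real x *s (B *v u) + complex_of_real x *s (F *v u)"
      using eq by (simp add: zx matrix_vector_mult_add_rdistrib vector_add_ldistrib)
    have res: "(A - mat (complex_of_real x) ** B) *v u = complex_of_real x *s (F *v u) - E *v u"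
      using eq2 by (simp add: matrix_vector_mult_diff_rdistrib mat_mult_mv algebra_simps)
    have nres: "norm ((A - mat (complex_of_real x) ** B) *v u) \<le> sqrt (1 + x\<^sup>2) * eps * norm u"
    proof -
      have "norm ((A - mat (complex_of_real x) ** B) *v u) \<le> \<bar>x\<bar> * norm (F *v u) + norm (E *v u)"
        unfolding res by (metis norm_triangle_ineq4 norm_smult_vec norm_of_real)
      also have "\<dots> \<le> \<bar>x\<bar> * (nF * norm u) + nE * norm u"
        using norm2_bound[of F u] norm2_bound[of E u]
        by (intro add_mono mult_left_mono) (auto simp: nE_def nF_def)
      also have "\<dots> = (\<bar>x\<bar> * nF + nE) * norm u" by (simp add: algebra_simps)
      also have "\<dots> \<le> (sqrt (1 + x\<^sup>2) * sqrt (nE\<^sup>2 + nF\<^sup>2)) * norm u"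
        using cs_lin[OF nEnn nFnn, of x] by (intro mult_right_mono) auto
      also have "\<dots> \<le> (sqrt (1 + x\<^sup>2) * eps) * norm u"
        using nEF by (intro mult_right_mono mult_left_mono) (auto simp: nE_def nF_def)
      finally show ?thesis by simp
    qed
    obtain i where Ki: "\<And>u. crawford A B * \<bar>lam i - x\<bar> * norm u
            \<le> sqrt (1 + (lam i)\<^sup>2) * norm ((A - mat (complex_of_real x) ** B) *v u)"
      using K[OF hA hB g eig Binj, of x] by blast
    define l where "l = lam i"
    have "\<gamma> * \<bar>l - x\<bar> * norm u \<le> sqrt (1 + l\<^sup>2) * (sqrt (1 + x\<^sup>2) * eps * norm u)"
    proof -
      have "sqrt (1 + l\<^sup>2) * norm ((A - mat (complex_of_real x) ** B) *v u) \<le> sqrt (1 + l\<^sup>2) * (sqrt (1 + x\<^sup>2) * eps * norm u)"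
        by (rule mult_left_mono[OF nres]) simp
      then show ?thesis using Ki[of u] unfolding \<gamma>_def l_def by linarith
    qed
    then have dl: "\<bar>l - x\<bar> \<le> eps / \<gamma> * (sqrt (1 + l\<^sup>2) * sqrt (1 + x\<^sup>2))"
      using up0 g by (simp add: \<gamma>_def field_simps)
    have xb: "\<bar>x\<bar> \<le> Mb"
    proof -
      have "norm ((A + E) *v u) \<le> (nA + eps) * norm u"
      proof -
        have "norm ((A + E) *v u) \<le> norm (A *v u) + norm (E *v u)"
          by (simp add: matrix_vector_mult_add_rdistrib norm_triangle_ineq)
        also have "\<dots> \<le> nA * norm u + nE * norm u"
          using norm2_bound[of A u] norm2_bound[of E u] by (intro add_mono) (auto simp: nA_def nE_def)
        also have "\<dots> \<le> (nA + eps) * norm u" using nEe up0 by (simp add: algebra_simps)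
        finally show ?thesis .
      qed
      moreover have "(sB - eps) * norm u \<le> norm ((B + F) *v u)"
      proof -
        have "sB * norm u - nF * norm u \<le> norm (B *v u) - norm (F *v u)"
          using sigB[of u] norm2_bound[of F u] by (simp add: nF_def)
        also have "\<dots> \<le> norm ((B + F) *v u)"
          by (metis matrix_vector_mult_add_rdistrib norm_diff_ineq diff_minus_eq_add norm_minus_cancel)
        finally show ?thesis using nFe up0 by (smt (verit) mult_right_mono left_diff_distrib)
      qed
      moreover have "norm ((A + E) *v u) = \<bar>x\<bar> * norm ((B + F) *v u)"
        by (simp add: eq zx norm_smult_vec)
      ultimately have "\<bar>x\<bar> * ((sB - eps) * norm u) \<le> (nA + eps) * norm u"
        by (smt (verit) abs_ge_zero mult_left_mono)
      then have "\<bar>x\<bar> * (sB - eps) \<le> nA + eps" using up0 by (simp add: mult.assoc[symmetric])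
      then show ?thesis using sBe by (simp add: Mb_def pos_le_divide_eq)
    qed
    have "sqrt (1 + l\<^sup>2) * sqrt (1 + x\<^sup>2) \<le> ((1 + l\<^sup>2) + (1 + x\<^sup>2)) / 2"
      by (rule amgm_sqrt) auto
    also have "\<dots> < 1 + Mb\<^sup>2"
    proof -
      have "l\<^sup>2 < Mb\<^sup>2" using lam_lt[of i] Mbp by (metis l_def abs_le_square_iff power2_abs abs_of_pos less_le not_le abs_ge_zero power_strict_mono zero_less_numeral abs_power2 order_le_less_trans pos2)
      moreover have "x\<^sup>2 \<le> Mb\<^sup>2" using xb by (metis abs_le_square_iff abs_of_pos Mbp)
      ultimately show ?thesis by simp
    qed
    finally have "sqrt (1 + l\<^sup>2) * sqrt (1 + x\<^sup>2) < 1 + Mb\<^sup>2" .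
    then have "eps / \<gamma> * (sqrt (1 + l\<^sup>2) * sqrt (1 + x\<^sup>2)) < eps / \<gamma> * (1 + Mb\<^sup>2)"
      using ep g by (intro mult_strict_left_mono) (auto simp: \<gamma>_def)
    then have "\<bar>l - x\<bar> < reps" using dl by (simp add: reps_def)
    then have "x \<in> {lam i - reps <..< lam i + reps}" by (auto simp: l_def)
    then show ?thesis using zx by blast
  qed
  have low: "complex_of_real x \<in> sym_pseudospectrum eps A B"
    if xin: "x \<in> {lam i - eps * r <..< lam i + eps * r}"
     and rdef: "r = (if A = 0 then 1 / norm2 B else max (1 / norm2 B) (\<bar>lam i\<bar> / norm2 A))" for i x r
  proof -
    obtain y where y1: "norm y = 1" and ay: "A *v y = complex_of_real (lam i) *s (B *v y)" using eigv by blast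
    define v where "v = complex_of_real x *s (B *v y) - A *v y"
    have vr: "ip y v \<in> \<real>"
    proof -
      have "ip y v = complex_of_real x * qform B y - qform A y"
        by (simp add: v_def qform_ip ip_diff_right ip_scale_right)
      then show ?thesis using qform_real[OF hA] qform_real[OF hB] by (simp add: Reals_diff Reals_mult)
    qed
    have vv: "v = complex_of_real (x - lam i) *s (B *v y)"
      by (simp add: v_def ay vector_sub_rdistrib)
    have nv: "norm v = \<bar>x - lam i\<bar> * norm (B *v y)" unfolding vv norm_smult_vec norm_of_real by simp
    have nBy: "sB \<le> norm (B *v y)" using sigB[of y] y1 by simp
    have nBy2: "norm (B *v y) \<le> nB" using norm2_bound[of B y] y1 by (simp add: nB_def)
    have nBp: "0 < nB" using sBp nBy nBy2 by simp
    have r1: "1 / nB * norm (B *v y) \<le> 1" using nBp nBy2 by simp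
    have rB: "r * norm (B *v y) \<le> 1"
    proof (cases "A = 0")
      case True then show ?thesis using r1 by (simp add: rdef nB_def)
    next
      case False
      have nAp: "0 < nA" using norm2_pos[OF False] by (simp add: nA_def)
      have "\<bar>lam i\<bar> * norm (B *v y) = norm (A *v y)" by (simp add: ay norm_smult_vec)
      also have "\<dots> \<le> nA" using norm2_bound[of A y] y1 by (simp add: nA_def)
      finally have r2: "\<bar>lam i\<bar> / nA * norm (B *v y) \<le> 1" using nAp by (simp add: field_simps)
      show ?thesis using False r1 r2 by (simp add: rdef nA_def nB_def max_def)
    qed
    have "\<bar>x - lam i\<bar> < eps * r" using xin by auto
    then have "\<bar>x - lam i\<bar> * norm (B *v y) \<le> eps * r * norm (B *v y)" by (intro mult_right_mono) auto
    also have "\<dots> \<le> eps" using rB ep by (simp add: mult.assoc mult_left_le)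
    finally have nve: "norm v \<le> eps" using nv by simp
    obtain E where hE: "hermitian E" and Ey: "E *v y = v" and nE: "norm2 E \<le> norm v"
      using householder[OF y1 vr] by blast
    have h0: "hermitian (0::complex^'n^'n)" by (simp add: hermitian_def)
    have "sqrt ((norm2 E)\<^sup>2 + (norm2 (0::complex^'n^'n))\<^sup>2) \<le> eps"
      using nE nve norm2_nonneg[of E] by (simp add: norm2_zero_mat)
    moreover have "(A + E) *v y = complex_of_real x *s ((B + 0) *v y)"
      by (simp add: matrix_vector_mult_add_rdistrib Ey v_def)
    moreover have "y \<noteq> 0" using y1 by auto
    ultimately show ?thesis unfolding sym_pseudospectrum_def using hE h0 by blast
  qed
  show ?thesis unfolding Let_def
  proof (intro conjI subsetI)
    fix w assume "w \<in> (\<Union>i. complex_of_real ` {lam i - eps * (if A = 0 then 1 / norm2 B else max (1 / norm2 B) (\<bar>lam i\<bar> / norm2 A)) <..< lam i + eps * (if A = 0 then 1 / norm2 B else max (1 / norm2 B) (\<bar>lam i\<bar> / norm2 A))})"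
    then obtain i x where "x \<in> {lam i - eps * (if A = 0 then 1 / norm2 B else max (1 / norm2 B) (\<bar>lam i\<bar> / norm2 A)) <..< lam i + eps * (if A = 0 then 1 / norm2 B else max (1 / norm2 B) (\<bar>lam i\<bar> / norm2 A))}" "w = complex_of_real x"
      by blast
    then show "w \<in> sym_pseudospectrum eps A B" using low by blast
  next
    fix w assume "w \<in> sym_pseudospectrum eps A B"
    then obtain i where "w \<in> complex_of_real ` {lam i - reps <..< lam i + reps}" using up by blast
    then show "w \<in> (\<Union>i. complex_of_real ` {lam i - eps / crawford A B * (1 + ((norm2 A + eps) / (sigma_min B - eps))\<^sup>2) <..< lam i + eps / crawford A B * (1 + ((norm2 A + eps) / (sigma_min B - eps))\<^sup>2)})"
      by (auto simp: reps_def Mb_def \<gamma>_def nA_def sB_def)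
  qed
qed


end
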